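(* The function $f:(0,\infty)\to\mathbb{R}$, $f(z)=\tfrac12W(z)^2+W(z)$ (which equals $-T_2(-z)$ where $T_2(z)=\sum_{n\ge1}n^{n-2}z^n/n!$, for small $z$), is a Bernstein function.
   Context: $W$ is the principal branch of Lambert's W function: the solution of $W(z)e^{W(z)}=z$ that is real and positive for $z>0$, with $W(z)=\sum_{n\ge1}(-n)^{n-1}z^n/n!$ near $0$. A $C^\infty$ function $g:(0,\infty)\to\mathbb{R}$ is completely monotonic if $(-1)^ng^{(n)}(z)\ge0$ for all $z>0$ and $n\ge0$; $f$ is a Bernstein function if $f$ is $C^\infty$, $f(z)>0$ for all $z>0$, and $f'$ is completely monotonic. *)

theory Defs
  imports "HOL-Analysis.Analysis"
begin

definition lambertW :: "real \<Rightarrow> real" where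
  "lambertW z = (THE w. w > 0 \<and> w * exp w = z)"

definition smooth_on_real :: "real set \<Rightarrow> (real \<Rightarrow> real) \<Rightarrow> bool" where
  "smooth_on_real S g \<longleftrightarrow> (\<forall>n. \<forall>z\<in>S. ((deriv ^^ n) g) differentiable (at z))"

definition completely_monotonic :: "(real \<Rightarrow> real) \<Rightarrow> bool" where
  "completely_monotonic g \<longleftrightarrow> smooth_on_real {0<..} g \<and>
     (\<forall>n. \<forall>z>0. (-1) ^ n * (deriv ^^ n) g z \<ge> 0)"

definition bernstein_function :: "(real \<Rightarrow> real) \<Rightarrow> bool" where
  "bernstein_function f \<longleftrightarrow> smooth_on_real {0<..} f \<and> (\<forall>z>0. f z > 0) \<and>
     completely_monotonic (deriv f)"

end

theory Submission
  imports Defs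
begin

lemma xexp_strict_mono:
  fixes a b :: real
  assumes "0 \<le> a" "a < b" shows "a * exp a < b * exp b"
proof -
  have "a * exp a \<le> a * exp b" using assms by (intro mult_left_mono) auto
  also have "\<dots> < b * exp b" using assms by (intro mult_strict_right_mono) auto
  finally show ?thesis .
qed

lemma W_exists:
  fixes z :: real assumes "z > 0"
  shows "\<exists>w. w > 0 \<and> w * exp w = z"
proof -
  have "\<exists>x. 0 \<le> x \<and> x \<le> z \<and> (\<lambda>w. w * exp w) x = z"
  proof (rule IVT)
    show "(\<lambda>w. w * exp w) 0 \<le> z" using assms by simp
    show "z \<le> (\<lambda>w. w * exp w) z" using assms by simp
    show "0 \<le> z" using assms by simp
    show "\<forall>x. 0 \<le> x \<and> x \<le> z \<longrightarrow> isCont (\<lambda>w. w * exp w) x" by (auto intro!: continuous_intros)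
  qed
  then obtain x where "0 \<le> x" "x * exp x = z" by auto
  moreover have "x \<noteq> 0" using assms \<open>x * exp x = z\<close> by auto
  ultimately show ?thesis by (intro exI[of _ x]) auto
qed

lemma W_uniq:
  fixes a b :: real
  assumes "a > 0" "b > 0" "a * exp a = b * exp b" shows "a = b"
  using xexp_strict_mono[of a b] xexp_strict_mono[of b a] assms
  by (cases a b rule: linorder_cases) auto

lemma W_props:
  fixes z :: real assumes "z > 0"
  shows "lambertW z > 0 \<and> lambertW z * exp (lambertW z) = z"
proof -
  have "\<exists>!w. w > 0 \<and> w * exp w = z" using W_exists[OF assms] W_uniq by blast
  then show ?thesis unfolding lambertW_def by (rule theI')
qed

lemma W_inv:
  fixes a :: real assumes "a > 0" shows "lambertW (a * exp a) = a"
  using W_props[of "a * exp a"] assms W_uniq[of "lambertW (a * exp a)" a] by auto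

lemma W_cont:
  fixes z :: real assumes "z > 0" shows "isCont lambertW z"
proof -
  define w where "w = lambertW z"
  have w: "w > 0" "w * exp w = z" using W_props[OF assms] w_def by auto
  have "isCont lambertW ((\<lambda>v. v * exp v) w)"
  proof (rule isCont_inverse_function[where d="w/2" and x=w and f="(\<lambda>v. v * exp v)" and g=lambertW])
    show "0 < w/2" using w by simp
    fix v :: real assume "\<bar>v - w\<bar> \<le> w/2"
    then have "v > 0" using w(1) by linarith
    then show "lambertW (v * exp v) = v" by (rule W_inv)
    show "isCont (\<lambda>v. v * exp v) v" by (auto intro!: continuous_intros)
  qed
  then show ?thesis using w by simp
qed

lemma W_deriv:
  fixes z :: real assumes "z > 0"
  shows "(lambertW has_real_derivative exp (- lambertW z) / (1 + lambertW z)) (at z)"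
proof -
  define w where "w = lambertW z"
  have w: "w > 0" "w * exp w = z" using W_props[OF assms] w_def by auto
  have d: "((\<lambda>v. v * exp v) has_real_derivative (exp w * (1 + w))) (at (lambertW z))"
    unfolding w_def[symmetric] by (auto intro!: derivative_eq_intros simp: algebra_simps)
  have "(lambertW has_real_derivative inverse (exp w * (1 + w))) (at z)"
  proof (rule DERIV_inverse_function[where f="(\<lambda>v. v * exp v)" and g=lambertW and x=z and a=0 and b="z+1", OF d])
    show "exp w * (1 + w) \<noteq> 0" using w by auto
    show "0 < z" "z < z + 1" using assms by auto
    fix y :: real assume "0 < y" "y < z + 1"
    then show "lambertW y * exp (lambertW y) = y" using W_props by auto
  next
    show "isCont lambertW z" using W_cont[OF assms] .
  qed
  moreover have "inverse (exp w * (1 + w)) = exp (- w) / (1 + w)"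
    by (simp add: exp_minus field_simps)
  ultimately show ?thesis using w_def by simp
qed

definition tm :: "real \<times> nat \<times> nat \<Rightarrow> real \<Rightarrow> real" where
  "tm p w = (case p of (c, k, m) \<Rightarrow> c * exp (- (real k * w)) / (1 + w) ^ m)"

definition step1 :: "real \<times> nat \<times> nat \<Rightarrow> (real \<times> nat \<times> nat) list" where
  "step1 p = (case p of (c, k, m) \<Rightarrow> [(c * real k, k + 1, m + 1), (c * real m, k + 1, m + 2)])"

definition ev :: "(real \<times> nat \<times> nat) list \<Rightarrow> real \<Rightarrow> real" where
  "ev L w = sum_list (map (\<lambda>p. tm p w) L)"

definition step :: "(real \<times> nat \<times> nat) list \<Rightarrow> (real \<times> nat \<times> nat) list" where
  "step L = concat (map step1 L)"

lemma alg_id: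
  fixes u c k E X :: real and m :: nat
  assumes "u > 0"
  shows "((0 * E + E * - (0 * w + X / u * k) * c) * u ^ m - c * E * (real m * ((0 + X / u) * u ^ (m - Suc 0)))) / (u ^ m * u ^ m)
     = - (c * k * (E * X) / u ^ (m + 1) + c * real m * (E * X) / u ^ (m + 2))"
proof (cases m)
  case 0 then show ?thesis using assms by (simp add: field_simps)
next
  case (Suc n)
  have "u ^ n > 0" using assms by simp
  then show ?thesis using assms Suc by (simp add: field_simps power_add)
qed

lemma tm_deriv:
  fixes z :: real assumes "z > 0"
  shows "((\<lambda>z. tm p (lambertW z)) has_real_derivative - ev (step1 p) (lambertW z)) (at z)"
proof -
  obtain c k m where p: "p = (c, k, m)" by (cases p) auto
  define w where "w = lambertW z"
  have w: "w > 0" using W_props[OF assms] w_def by auto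
  have D: "(lambertW has_real_derivative exp (- w) / (1 + w)) (at z)"
    using W_deriv[OF assms] w_def by simp
  have e: "exp (- ((1 + real k) * w)) = exp (- (real k * w)) * exp (- w)"
    by (simp add: algebra_simps exp_add[symmetric])
  have ev: "ev (step1 p) w = c * real k * (exp (- (real k * w)) * exp (- w)) / (1+w) ^ (m + 1)
     + c * real m * (exp (- (real k * w)) * exp (- w)) / (1+w) ^ (m + 2)"
    unfolding p ev_def step1_def tm_def by (simp add: e)
  have "((\<lambda>z. c * exp (- (real k * lambertW z)) / (1 + lambertW z) ^ m) has_real_derivative - ev (step1 p) w) (at z)"
    apply (rule derivative_eq_intros D[unfolded w_def] refl)+
     apply (use w in \<open>simp add: w_def[symmetric]\<close>)
    apply (simp only: w_def[symmetric] ev)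
    apply (rule alg_id)
    using w by simp
  then show ?thesis unfolding p w_def tm_def by simp
qed

lemma ev_deriv:
  fixes z :: real assumes "z > 0"
  shows "((\<lambda>z. ev L (lambertW z)) has_real_derivative - ev (step L) (lambertW z)) (at z)"
proof (induction L)
  case Nil
  then show ?case by (simp add: ev_def step_def)
next
  case (Cons p L)
  have "((\<lambda>z. tm p (lambertW z) + ev L (lambertW z)) has_real_derivative
        - ev (step1 p) (lambertW z) + - ev (step L) (lambertW z)) (at z)"
    by (intro DERIV_add tm_deriv[OF assms] Cons)
  then show ?case by (simp add: ev_def step_def)
qed

lemma ev_nonneg:
  assumes "\<forall>p\<in>set L. fst p \<ge> 0" "w > 0" shows "ev L w \<ge> 0"
  using assms unfolding ev_def
  by (induction L) (auto simp: tm_def intro!: add_nonneg_nonneg)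

lemma step_nonneg:
  assumes "\<forall>p\<in>set L. fst p \<ge> 0" shows "\<forall>p\<in>set (step L). fst p \<ge> 0"
  using assms unfolding step_def step1_def by auto

lemma stepn_nonneg: "\<forall>p\<in>set ((step ^^ n) [(1, 1, 0)]). fst p \<ge> 0"
  proof (induction n)
  case (Suc n) then show ?case using step_nonneg by simp
qed simp

lemma iter_deriv:
  fixes G :: "nat \<Rightarrow> real \<Rightarrow> real" and h :: "real \<Rightarrow> real"
  assumes G: "\<And>n z. z > 0 \<Longrightarrow> (G n has_real_derivative G (Suc n) z) (at z)"
    and h: "\<And>z. z > 0 \<Longrightarrow> h z = G 0 z"
  shows "\<forall>z>0. (deriv ^^ n) h z = G n z"
proof (induction n)
  case 0 then show ?case using h by simp
next
  case (Suc n)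
  show ?case
  proof (intro allI impI)
    fix z :: real assume z: "z > 0"
    have "((deriv ^^ n) h has_real_derivative G (Suc n) z) (at z)"
      by (rule has_field_derivative_transform_within_open[OF G[OF z], of "{0<..}"])
         (use z Suc in auto)
    then show "(deriv ^^ Suc n) h z = G (Suc n) z" by (simp add: DERIV_imp_deriv)
  qed
qed

lemma iter_differentiable:
  fixes G :: "nat \<Rightarrow> real \<Rightarrow> real" and h :: "real \<Rightarrow> real"
  assumes G: "\<And>n z. z > 0 \<Longrightarrow> (G n has_real_derivative G (Suc n) z) (at z)"
    and h: "\<And>z. z > 0 \<Longrightarrow> h z = G 0 z"
    and z: "z > 0"
  shows "(deriv ^^ n) h differentiable (at z)"
proof -
  have "((deriv ^^ n) h has_real_derivative G (Suc n) z) (at z)"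
    by (rule has_field_derivative_transform_within_open[OF G[OF z], of "{0<..}"])
       (use z iter_deriv[OF G h, of n] in auto)
  then show ?thesis using real_differentiable_def by blast
qed

theorem mainTheorem9:
  shows "bernstein_function (\<lambda>z. (1/2) * (lambertW z)^2 + lambertW z)"
proof -
  define f where "f = (\<lambda>z::real. (1/2) * (lambertW z)^2 + lambertW z)"
  define L where "L = (\<lambda>n. (step ^^ n) [(1::real, 1::nat, 0::nat)])"
  define E where "E = (\<lambda>n z. (-1::real) ^ n * ev (L n) (lambertW z))"
  define G where "G = (\<lambda>n. case n of 0 \<Rightarrow> f | Suc n \<Rightarrow> E n)"
  have E: "(E n has_real_derivative E (Suc n) z) (at z)" if "z > 0" for n z
  proof -
    have "((\<lambda>z. (-1::real) ^ n * ev (L n) (lambertW z)) has_real_derivative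
           (-1) ^ n * - ev (step (L n)) (lambertW z)) (at z)"
      by (intro DERIV_cmult ev_deriv that)
    then show ?thesis unfolding E_def L_def by simp
  qed
  have f: "(f has_real_derivative E 0 z) (at z)" if "z > 0" for z
  proof -
    define w where "w = lambertW z"
    have w: "w > 0" using W_props[OF that] w_def by auto
    have nz: "1 + (w * w + w * 2) \<noteq> 0" using w by (smt (verit) mult_pos_pos)
    have "(f has_real_derivative exp (- w)) (at z)"
      unfolding f_def w_def
      apply (rule derivative_eq_intros W_deriv[OF that] refl)+
      apply (simp only: w_def[symmetric])
      using w nz by (simp add: field_simps)
    then show ?thesis
      unfolding E_def L_def ev_def tm_def w_def by simp
  qed
  have G: "(G n has_real_derivative G (Suc n) z) (at z)" if "z > 0" for n z
    using E[OF that] f[OF that] by (cases n) (auto simp: G_def)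
  have G0: "f z = G 0 z" for z by (simp add: G_def)
  have smooth: "smooth_on_real {0<..} f"
    unfolding smooth_on_real_def using iter_differentiable[OF G G0] by auto
  have dd: "(deriv ^^ n) (deriv f) = (deriv ^^ Suc n) f" for n
    by (simp only: funpow_Suc_right comp_def)
  have pos: "\<forall>z>0. f z > 0" unfolding f_def using W_props
    by (auto intro!: add_nonneg_pos)
  have cm: "completely_monotonic (deriv f)"
    unfolding completely_monotonic_def smooth_on_real_def
  proof (intro conjI allI ballI impI)
    fix n and z :: real assume "z \<in> {0<..}"
    then show "(deriv ^^ n) (deriv f) differentiable (at z)"
      unfolding dd using iter_differentiable[OF G G0, of z "Suc n"] by auto
  next
    fix n and z :: real assume z: "z > 0"
    have "(deriv ^^ n) (deriv f) z = E n z"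
      unfolding dd using iter_deriv[OF G G0, of "Suc n"] z by (simp add: G_def)
    moreover have "(-1) ^ n * E n z = ev (L n) (lambertW z)"
      unfolding E_def by (simp flip: power_add mult.assoc add: power_mult_distrib[symmetric])
    moreover have "ev (L n) (lambertW z) \<ge> 0"
      using ev_nonneg stepn_nonneg W_props[OF z] unfolding L_def by auto
    ultimately show "(-1) ^ n * (deriv ^^ n) (deriv f) z \<ge> 0" by simp
  qed
  show ?thesis using smooth pos cm unfolding bernstein_function_def f_def by simp
qed

end
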